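(* Let $p>2$ be a prime, $K\in\{\mathbb Z_{(p)},\mathbb Z_p\}$, $F$ a field containing $K$, $G=\langle a\rangle\cong C_{p^2}$, $\Phi(x)=x^{p-1}+\dots+x+1$, and for $1\leq j\leq p-2$ let $U_j$ be the $KC_{p^2}$-submodule of $(KC_{p^2})^{2}$ generated by $\big((a-1)^{j+1}+\Phi(a),\,(a-1)^j\big)$ and $\big((a-1)\Phi(a^p),\,\Phi(a^p)\big)$. Let $f_j:C_{p^2}\to\widehat{U_j}$ be the cocycle with $f_j(a)=p^{-2}\Phi(a)\Phi(a^p)(1,0)+U_j$. Then $\mathrm{Crys}(C_{p^2};U_j;f_j)$ is torsion-free.
   Context: $FM=F\otimes_KM$, $\widehat M=FM/M$ with $g(x+M)=gx+M$; a $1$-cocycle is $T:G\to\widehat M$ with $T(gh)=gT(h)+T(g)$, determined for cyclic $G$ by $T(a)$ via $T(a^k)=(1+a+\dots+a^{k-1})T(a)$. $\mathrm{Crys}(G;M;T)=\{(g,x):g\in G,\ x\in FM,\ x+M=T(g)\}$ with $(g,x)(g',x')=(gg',g'x+x')$. *)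

theory Defs
  imports "HOL-Computational_Algebra.Polynomial" "HOL-Library.Product_Plus" "HOL-Algebra.Group"
begin

(* The group ring F C_q, C_q = <a>, is modelled as F[x]/(x^q - 1): elements are
   polynomials reduced modulo x^q - 1, with a = x.  Elements of (F C_q)^2 are pairs. *)

definition cg_mod :: "nat \<Rightarrow> 'f::field poly" where
  "cg_mod q = monom 1 q - 1"

definition red :: "nat \<Rightarrow> 'f::field poly \<Rightarrow> 'f poly" where
  "red q u = u mod cg_mod q"

definition cg_ring :: "nat \<Rightarrow> 'f::field poly set" where
  "cg_ring q = {u. red q u = u}"

definition cg_ringK :: "nat \<Rightarrow> 'f set \<Rightarrow> 'f::field poly set" where
  "cg_ringK q K = {u \<in> cg_ring q. \<forall>i. coeff u i \<in> K}"

definition pmul2 :: "nat \<Rightarrow> 'f::field poly \<Rightarrow> 'f poly \<times> 'f poly \<Rightarrow> 'f poly \<times> 'f poly" where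
  "pmul2 q r x = (red q (r * fst x), red q (r * snd x))"

definition psmult :: "'f::field \<Rightarrow> 'f poly \<times> 'f poly \<Rightarrow> 'f poly \<times> 'f poly" where
  "psmult c x = (smult c (fst x), smult c (snd x))"

definition act :: "nat \<Rightarrow> nat \<Rightarrow> 'f::field poly \<times> 'f poly \<Rightarrow> 'f poly \<times> 'f poly" where
  "act q k x = pmul2 q (monom 1 k) x"

(* Phi p m = 1 + a^m + ... + a^(m(p-1)); Phi(a) = Phi p 1, Phi(a^p) = Phi p p *)
definition Phi :: "nat \<Rightarrow> nat \<Rightarrow> 'f::field poly" where
  "Phi p m = (\<Sum>i<p. monom 1 (m * i))"

definition am1 :: "'f::field poly" where
  "am1 = [:-1, 1:]"

definition gen1 :: "nat \<Rightarrow> nat \<Rightarrow> 'f::field poly \<times> 'f poly" where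
  "gen1 p j = pmul2 (p^2) 1 (am1 ^ (j+1) + Phi p 1, am1 ^ j)"

definition gen2 :: "nat \<Rightarrow> 'f::field poly \<times> 'f poly" where
  "gen2 p = pmul2 (p^2) 1 (am1 * Phi p p, Phi p p)"

definition U_mod :: "nat \<Rightarrow> 'f set \<Rightarrow> nat \<Rightarrow> ('f::field poly \<times> 'f poly) set" where
  "U_mod p K j = {pmul2 (p^2) r1 (gen1 p j) + pmul2 (p^2) r2 (gen2 p) | r1 r2.
                   r1 \<in> cg_ringK (p^2) K \<and> r2 \<in> cg_ringK (p^2) K}"

(* FM = F \<otimes>_K M, realised as the F-linear span of M inside (F C_q)^2 *)
definition F_span :: "('f::field poly \<times> 'f poly) set \<Rightarrow> ('f poly \<times> 'f poly) set" where
  "F_span M = {x. \<exists>S c. finite S \<and> S \<subseteq> M \<and> x = (\<Sum>u\<in>S. psmult (c u) u)}"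

(* the coset x + M, an element of \<hat>M = FM/M *)
definition coset :: "('f::field poly \<times> 'f poly) set \<Rightarrow> 'f poly \<times> 'f poly \<Rightarrow> ('f poly \<times> 'f poly) set" where
  "coset M x = (\<lambda>u. x + u) ` M"

(* the cocycle f_j : C_{p^2} \<rightarrow> \<hat>U_j, indexed by the exponent k (g = a^k, k < p^2),
   f_j(a^k) = (1 + a + ... + a^(k-1)) f_j(a),  f_j(a) = p^(-2) Phi(a) Phi(a^p) (1,0) + U_j *)
definition fj_cocycle :: "nat \<Rightarrow> 'f set \<Rightarrow> nat \<Rightarrow> nat \<Rightarrow> ('f::field_char_0 poly \<times> 'f poly) set" where
  "fj_cocycle p K j k =
     coset (U_mod p K j)
       (pmul2 (p^2) (\<Sum>i<k. monom 1 i)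
          (psmult (1 / of_nat (p^2)) (red (p^2) (Phi p 1 * Phi p p), 0)))"

(* Crys(C_q; M; T) with g = a^k represented by k < q *)
definition Crys :: "nat \<Rightarrow> ('f::field poly \<times> 'f poly) set \<Rightarrow> (nat \<Rightarrow> ('f poly \<times> 'f poly) set)
                     \<Rightarrow> (nat \<times> ('f poly \<times> 'f poly)) monoid" where
  "Crys q M T = \<lparr> carrier = {(k, x). k < q \<and> x \<in> F_span M \<and> coset M x = T k},
                  mult = (\<lambda>(g, x) (g', x'). ((g + g') mod q, act q g' x + x')),
                  one = (0, (0, 0)) \<rparr>"

definition torsion_free :: "'a monoid \<Rightarrow> bool" where
  "torsion_free G \<longleftrightarrow> (\<forall>z \<in> carrier G. \<forall>n::nat. n > 0 \<longrightarrow> z [^]\<^bsub>G\<^esub> n = \<one>\<^bsub>G\<^esub> \<longrightarrow> z = \<one>\<^bsub>G\<^esub>)"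

definition Zloc :: "nat \<Rightarrow> 'f::field_char_0 set" where
  "Zloc p = {of_int a / of_int b | a b. \<not> int p dvd b}"

definition padic_ints :: "nat \<Rightarrow> (nat \<Rightarrow> int) set" where
  "padic_ints p = {x. \<forall>n. 0 \<le> x n \<and> x n < int p ^ n \<and> x (Suc n) mod int p ^ n = x n}"

definition padd :: "nat \<Rightarrow> (nat \<Rightarrow> int) \<Rightarrow> (nat \<Rightarrow> int) \<Rightarrow> nat \<Rightarrow> int" where
  "padd p x y = (\<lambda>n. (x n + y n) mod int p ^ n)"

definition pmult :: "nat \<Rightarrow> (nat \<Rightarrow> int) \<Rightarrow> (nat \<Rightarrow> int) \<Rightarrow> nat \<Rightarrow> int" where
  "pmult p x y = (\<lambda>n. (x n * y n) mod int p ^ n)"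

definition pone :: "nat \<Rightarrow> nat \<Rightarrow> int" where
  "pone p = (\<lambda>n. 1 mod int p ^ n)"

definition is_Zp_in :: "nat \<Rightarrow> 'f::field set \<Rightarrow> bool" where
  "is_Zp_in p K \<longleftrightarrow> (\<exists>\<iota>. inj_on \<iota> (padic_ints p) \<and> \<iota> ` padic_ints p = K \<and> \<iota> (pone p) = 1 \<and>
      (\<forall>x\<in>padic_ints p. \<forall>y\<in>padic_ints p.
          \<iota> (padd p x y) = \<iota> x + \<iota> y \<and> \<iota> (pmult p x y) = \<iota> x * \<iota> y))"

end

theory Submission imports Defs "HOL-Computational_Algebra.Primes" begin

definition subr :: "'f::field_char_0 set \<Rightarrow> bool" where
  "subr K \<longleftrightarrow> 0 \<in> K \<and> 1 \<in> K \<and> (\<forall>a\<in>K. \<forall>b\<in>K. a + b \<in> K \<and> a * b \<in> K) \<and> (\<forall>a\<in>K. - a \<in> K)"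

definition Kp :: "'f::field_char_0 set \<Rightarrow> 'f poly \<Rightarrow> bool" where
  "Kp K f \<longleftrightarrow> (\<forall>i. coeff f i \<in> K)"

lemma subr_add: "subr K \<Longrightarrow> a \<in> K \<Longrightarrow> b \<in> K \<Longrightarrow> a + b \<in> K"
  and subr_mult: "subr K \<Longrightarrow> a \<in> K \<Longrightarrow> b \<in> K \<Longrightarrow> a * b \<in> K"
  and subr_neg: "subr K \<Longrightarrow> a \<in> K \<Longrightarrow> - a \<in> K"
  and subr_0: "subr K \<Longrightarrow> 0 \<in> K"
  and subr_1: "subr K \<Longrightarrow> 1 \<in> K"
  by (auto simp: subr_def)

lemma subr_diff: "subr K \<Longrightarrow> a \<in> K \<Longrightarrow> b \<in> K \<Longrightarrow> a - b \<in> K"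
  using subr_add[of K a "-b"] subr_neg[of K b] by simp

lemma subr_nat: "subr K \<Longrightarrow> of_nat n \<in> K"
  by (induction n) (auto intro: subr_add subr_0 subr_1)

lemma subr_int: "subr K \<Longrightarrow> of_int z \<in> K"
proof (cases "z \<ge> 0")
  case True
  assume "subr K"
  then show ?thesis using True subr_nat[of K "nat z"] by simp
next
  case False
  assume "subr K"
  then have "- of_nat (nat (-z)) \<in> K" using subr_neg subr_nat by blast
  then show ?thesis using False by simp
qed

lemma subr_sum: "subr K \<Longrightarrow> (\<And>i. i \<in> A \<Longrightarrow> f i \<in> K) \<Longrightarrow> sum f A \<in> K"
  by (induction A rule: infinite_finite_induct) (auto intro: subr_add subr_0)

lemma Kp_add: "subr K \<Longrightarrow> Kp K f \<Longrightarrow> Kp K g \<Longrightarrow> Kp K (f + g)"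
  by (auto simp: Kp_def intro: subr_add)
lemma Kp_diff: "subr K \<Longrightarrow> Kp K f \<Longrightarrow> Kp K g \<Longrightarrow> Kp K (f - g)"
  by (auto simp: Kp_def intro: subr_diff)
lemma Kp_mult: "subr K \<Longrightarrow> Kp K f \<Longrightarrow> Kp K g \<Longrightarrow> Kp K (f * g)"
  unfolding Kp_def coeff_mult by (auto intro!: subr_sum subr_mult)
lemma Kp_smult: "subr K \<Longrightarrow> c \<in> K \<Longrightarrow> Kp K g \<Longrightarrow> Kp K (smult c g)"
  by (auto simp: Kp_def intro: subr_mult)
lemma Kp_monom: "subr K \<Longrightarrow> c \<in> K \<Longrightarrow> Kp K (monom c n)"
  by (auto simp: Kp_def coeff_monom intro: subr_0)
lemma Kp_0: "subr K \<Longrightarrow> Kp K 0"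
  by (auto simp: Kp_def intro: subr_0)
lemma Kp_1: "subr K \<Longrightarrow> Kp K 1"
  by (auto simp: Kp_def coeff_1 intro: subr_0 subr_1)
lemma Kp_b: "subr K \<Longrightarrow> Kp K [:-1, 1:]"
  by (auto simp: Kp_def coeff_pCons split: nat.splits intro: subr_0 subr_1 subr_neg)
lemma Kp_power: "subr K \<Longrightarrow> Kp K f \<Longrightarrow> Kp K (f ^ n)"
  by (induction n) (auto intro: Kp_mult Kp_1)
lemma Kp_poly1: "subr K \<Longrightarrow> Kp K f \<Longrightarrow> poly f 1 \<in> K"
  unfolding poly_altdef Kp_def by (auto intro!: subr_sum)

lemma Kp_div:
  assumes K: "subr K" and d: "Kp K d" "lead_coeff d = 1"
  shows "Kp K (d * w) \<Longrightarrow> Kp K w"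
proof (induction "degree w" arbitrary: w rule: less_induct)
  case less
  show ?case
  proof (cases "w = 0")
    case True then show ?thesis using Kp_0[OF K] by simp
  next
    case False
    have d0: "d \<noteq> 0" using d by auto
    define m where "m = monom (lead_coeff w) (degree w)"
    have "lead_coeff (d * w) = lead_coeff w" using d by (simp add: lead_coeff_mult)
    then have lcK: "lead_coeff w \<in> K" using less.prems Kp_def by metis
    have mK: "Kp K m" unfolding m_def using Kp_monom[OF K lcK] .
    have eq: "d * (w - m) = d * w - d * m" by (simp add: algebra_simps)
    have K1: "Kp K (d * (w - m))" unfolding eq
      by (intro Kp_diff[OF K] less.prems Kp_mult[OF K] d mK)
    have "Kp K (w - m)"
    proof (cases "w - m = 0")
      case True then show ?thesis using Kp_0[OF K] by simp
    next
      case False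
      have le: "degree (w - m) \<le> degree w"
        unfolding m_def by (rule order.trans[OF degree_diff_le_max]) (auto simp: degree_monom_le)
      have "coeff (w - m) (degree w) = 0" by (simp add: m_def)
      then have "degree (w - m) \<noteq> degree w" using False leading_coeff_0_iff by metis
      with le have "degree (w - m) < degree w" by simp
      then show ?thesis using less.hyps K1 by blast
    qed
    then have "Kp K ((w - m) + m)" by (rule Kp_add[OF K _ mK])
    then show ?thesis by simp
  qed
qed

lemma c_coeff:
  fixes p :: nat
  assumes K: "subr K" and p: "prime p" "odd p"
  shows "Kp K (smult (1 / of_nat p) (monom 1 p - 1 - [:-1, 1:] ^ p) :: 'f::field_char_0 poly)"
  unfolding Kp_def
proof
  fix i
  have p0: "(of_nat p :: 'f) \<noteq> 0" using p prime_gt_0_nat by simp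
  show "coeff (smult (1 / of_nat p) (monom 1 p - 1 - [:-1, 1:] ^ p) :: 'f poly) i \<in> K"
  proof (cases "i \<le> p")
    case False
    then have "coeff ([:-1, 1:] ^ p :: 'f poly) i = 0"
      by (intro coeff_eq_0) (simp add: degree_power_eq)
    then show ?thesis using False by (simp add: coeff_monom subr_0[OF K])
  next
    case True
    have cb: "coeff ([:-1, 1:] ^ p :: 'f poly) i = of_nat (p choose i) * (-1) ^ (p - i)"
      using coeff_linear_poly_power[OF True, of "-1::'f" 1] by simp
    consider "i = 0" | "i = p" | "0 < i \<and> i < p" using True by linarith
    then show ?thesis
    proof cases
      case 1
      have "(-1::'f) ^ p = -1" using p(2) by simp
      then show ?thesis using 1 cb p0 by (simp add: coeff_monom subr_0[OF K] coeff_1)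
    next
      case 2
      then show ?thesis using cb p0 prime_gt_0_nat[OF p(1)] by (simp add: coeff_monom subr_0[OF K] coeff_1)
    next
      case 3
      then obtain m where m: "p choose i = p * m" using dvd_choose_prime[of i p] p by (auto elim!: dvdE)
      have "coeff (smult (1 / of_nat p) (monom 1 p - 1 - [:-1, 1:] ^ p) :: 'f poly) i
            = - (of_nat m * (-1) ^ (p - i))"
        using 3 cb p0 m by (simp add: coeff_monom coeff_1 field_simps)
      also have "\<dots> = of_int (- (int m * (-1) ^ (p - i)))" by simp
      finally have e: "coeff (smult (1 / of_nat p) (monom 1 p - 1 - [:-1, 1:] ^ p) :: 'f poly) i
            = of_int (- (int m * (-1) ^ (p - i)))" .
      show ?thesis unfolding e by (rule subr_int[OF K])
    qed
  qed
qed

lemma keyF: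
  fixes p j :: nat and s1 s2 :: "'f::field_char_0 poly"
  assumes K: "subr K" and p: "prime p" "odd p" and j: "j < p"
    and s: "Kp K s1" "Kp K s2"
    and dv: "(monom 1 p - 1) dvd (s1 * [:-1, 1:] ^ j + smult (of_nat p) s2)"
  shows "\<exists>\<kappa>\<in>K. poly s1 1 = of_nat p * \<kappa>"
proof -
  define b :: "'f poly" where "b = [:-1, 1:]"
  define X where "X = (monom 1 p - 1 :: 'f poly)"
  have p0: "(of_nat p :: 'f) \<noteq> 0" using p prime_gt_0_nat by simp
  have pp: "p > 0" using p prime_gt_0_nat by simp
  obtain w where w: "s1 * b ^ j + smult (of_nat p) s2 = X * w" using dv unfolding b_def X_def by (auto elim!: dvdE)
  have XK: "Kp K X" unfolding X_def by (intro Kp_diff[OF K] Kp_monom[OF K] subr_1[OF K] Kp_1[OF K])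
  have Xlc: "lead_coeff X = 1"
  proof -
    have "X = monom 1 p + (- 1)" unfolding X_def by simp
    moreover have "degree (monom 1 p + (-1) :: 'f poly) = p"
      by (rule trans[OF degree_add_eq_left]) (use pp in \<open>auto simp: degree_monom_eq\<close>)
    ultimately have "degree X = p" by simp
    then show ?thesis using pp by (simp add: X_def coeff_1)
  qed
  have bK: "Kp K b" unfolding b_def by (rule Kp_b[OF K])
  have fK: "Kp K (X * w)" unfolding w[symmetric]
    by (intro Kp_add[OF K] Kp_mult[OF K] Kp_smult[OF K] s Kp_power[OF K] bK subr_nat[OF K])
  have wK: "Kp K w" by (rule Kp_div[OF K XK Xlc fK])
  define c where "c = smult (1 / of_nat p) (monom 1 p - 1 - b ^ p)"
  have cK: "Kp K c" unfolding c_def b_def by (rule c_coeff[OF K p])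
  have Xeq: "X = b ^ p + smult (of_nat p) c" unfolding c_def X_def using p0 by simp
  have bp: "b ^ p = b ^ j * b ^ (p - j)" using j by (simp add: power_add[symmetric])
  have w': "s1 * b ^ j = X * w - smult (of_nat p) s2" using w by (simp add: algebra_simps)
  have "b ^ j * (s1 - b ^ (p - j) * w) = smult (of_nat p) (c * w - s2)"
  proof -
    have "b ^ j * (s1 - b ^ (p - j) * w) = s1 * b ^ j - b ^ p * w" by (simp add: bp algebra_simps)
    also have "\<dots> = smult (of_nat p) (c * w - s2)" unfolding w' Xeq by (simp add: algebra_simps smult_diff_right)
    finally show ?thesis .
  qed
  then have "b ^ j dvd smult (of_nat p) (c * w - s2)" by (metis dvdI)
  then have "b ^ j dvd (c * w - s2)" using p0 by (rule dvd_smult_cancel)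
  then obtain r where r: "c * w - s2 = b ^ j * r" by (auto elim!: dvdE)
  have "Kp K (b ^ j * r)" unfolding r[symmetric] by (intro Kp_diff[OF K] Kp_mult[OF K] cK wK s)
  moreover have "lead_coeff (b ^ j) = 1" by (simp add: lead_coeff_power b_def)
  ultimately have rK: "Kp K r" using Kp_div[OF K Kp_power[OF K bK]] by blast
  have "b ^ j * (s1 - b ^ (p - j) * w) = b ^ j * smult (of_nat p) r"
    using \<open>b ^ j * (s1 - b ^ (p - j) * w) = smult (of_nat p) (c * w - s2)\<close> r by simp
  moreover have "b ^ j \<noteq> 0" unfolding b_def by simp
  ultimately have "s1 - b ^ (p - j) * w = smult (of_nat p) r" using mult_left_cancel by blast
  then have "poly (s1 - b ^ (p - j) * w) 1 = poly (smult (of_nat p) r) 1" by simp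
  moreover have "(0::'f) ^ (p - j) = 0" using j by simp
  ultimately have "poly s1 1 = of_nat p * poly r 1" by (simp add: b_def)
  then show ?thesis using Kp_poly1[OF K rK] by blast
qed

lemma noninv:
  fixes p t :: nat
  assumes K: "subr K" and p: "prime p" and nK: "\<forall>\<kappa>\<in>K. of_nat p * \<kappa> \<noteq> (1::'f::field_char_0)"
    and t: "\<not> p dvd t" and k: "\<kappa> \<in> K" "of_nat t = of_nat p * (\<kappa>::'f)"
  shows False
proof -
  have "coprime (int t) (int p)" using t p
    by (metis coprime_commute prime_imp_coprime coprime_int_iff)
  then have "gcd (int t) (int p) = 1" by simp
  then obtain u v where uv: "u * int t + v * int p = 1" using bezout_int[of "int t" "int p"] by auto
  then have "(of_int (u * int t + v * int p) :: 'f) = 1" by simp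
  then have "of_int u * of_nat t + of_int v * of_nat p = (1::'f)" by simp
  then have "of_nat p * (of_int u * \<kappa> + of_int v) = (1::'f)" using k(2) by (simp add: algebra_simps)
  moreover have "of_int u * \<kappa> + of_int v \<in> K" by (intro subr_add[OF K] subr_mult[OF K] subr_int[OF K] k)
  ultimately show False using nK by blast
qed

lemma Zloc_props:
  fixes p :: nat
  assumes p: "prime p"
  shows "subr (Zloc p :: 'f::field_char_0 set) \<and> (\<forall>\<kappa>\<in>(Zloc p :: 'f set). of_nat p * \<kappa> \<noteq> 1)"
proof
  have pi: "prime (int p)" using p by simp
  have mem: "of_int a / of_int b \<in> (Zloc p :: 'f set)" if "\<not> int p dvd b" for a b
    using that unfolding Zloc_def by blast
  have nz: "b \<noteq> 0" if "\<not> int p dvd b" for b :: int using that by auto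
  show "subr (Zloc p :: 'f set)"
    unfolding subr_def
  proof (intro conjI ballI)
    show "0 \<in> (Zloc p :: 'f set)" using mem[of 1 0] pi by (simp add: prime_int_iff)
    show "1 \<in> (Zloc p :: 'f set)" using mem[of 1 1] pi by (simp add: prime_int_iff)
  next
    fix x y assume "x \<in> (Zloc p :: 'f set)" "y \<in> (Zloc p :: 'f set)"
    then obtain a b c d where x: "x = of_int a / of_int b" "\<not> int p dvd b"
      and y: "y = of_int c / of_int d" "\<not> int p dvd d" unfolding Zloc_def by blast
    have bd: "\<not> int p dvd (b * d)" using x(2) y(2) pi by (simp add: prime_dvd_mult_iff)
    have b0: "(of_int b :: 'f) \<noteq> 0" and d0: "(of_int d :: 'f) \<noteq> 0" using nz x(2) y(2) by auto
    have e1: "x + y = of_int (a * d + c * b) / of_int (b * d)" using b0 d0 x y by (simp add: field_simps)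
    show "x + y \<in> (Zloc p :: 'f set)" unfolding e1 by (rule mem[OF bd])
    have e2: "x * y = of_int (a * c) / of_int (b * d)" using b0 d0 x y by (simp add: field_simps)
    show "x * y \<in> (Zloc p :: 'f set)" unfolding e2 by (rule mem[OF bd])
  next
    fix x assume "x \<in> (Zloc p :: 'f set)"
    then obtain a b where x: "x = of_int a / of_int b" "\<not> int p dvd b" unfolding Zloc_def by blast
    have e: "- x = of_int (- a) / of_int b" using x by simp
    show "- x \<in> (Zloc p :: 'f set)" unfolding e by (rule mem[OF x(2)])
  qed
  show "\<forall>\<kappa>\<in>(Zloc p :: 'f set). of_nat p * \<kappa> \<noteq> 1"
  proof
    fix x assume "x \<in> (Zloc p :: 'f set)"
    then obtain a b where x: "x = of_int a / of_int b" "\<not> int p dvd b" unfolding Zloc_def by blast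
    have b0: "(of_int b :: 'f) \<noteq> 0" using nz x(2) by auto
    show "of_nat p * x \<noteq> 1"
    proof
      assume "of_nat p * x = 1"
      then have "(of_int (int p * a) :: 'f) = of_int b" using b0 x by (simp add: field_simps)
      then have "int p * a = b" by (simp only: of_int_eq_iff)
      then show False using x(2) by auto
    qed
  qed
qed

lemma padd_mem:
  assumes "p > 1" "x \<in> padic_ints p" "y \<in> padic_ints p"
  shows "padd p x y \<in> padic_ints p"
proof -
  have pos: "(0::int) < int p ^ n" for n using assms(1) by simp
  have dv: "int p ^ n dvd int p ^ Suc n" for n by simp
  show ?thesis unfolding padic_ints_def padd_def
  proof (intro CollectI allI conjI)
    fix n
    show "0 \<le> (x n + y n) mod int p ^ n" "(x n + y n) mod int p ^ n < int p ^ n" using pos by auto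
    have "(x (Suc n) + y (Suc n)) mod int p ^ Suc n mod int p ^ n = (x (Suc n) + y (Suc n)) mod int p ^ n"
      by (rule mod_mod_cancel[OF dv])
    also have "\<dots> = (x (Suc n) mod int p ^ n + y (Suc n) mod int p ^ n) mod int p ^ n" by (simp add: mod_add_eq)
    also have "\<dots> = (x n + y n) mod int p ^ n" using assms(2,3) unfolding padic_ints_def by simp
    finally show "(x (Suc n) + y (Suc n)) mod int p ^ Suc n mod int p ^ n = (x n + y n) mod int p ^ n" .
  qed
qed

lemma pmult_mem:
  assumes "p > 1" "x \<in> padic_ints p" "y \<in> padic_ints p"
  shows "pmult p x y \<in> padic_ints p"
proof -
  have pos: "(0::int) < int p ^ n" for n using assms(1) by simp
  have dv: "int p ^ n dvd int p ^ Suc n" for n by simp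
  show ?thesis unfolding padic_ints_def pmult_def
  proof (intro CollectI allI conjI)
    fix n
    show "0 \<le> (x n * y n) mod int p ^ n" "(x n * y n) mod int p ^ n < int p ^ n" using pos by auto
    have "(x (Suc n) * y (Suc n)) mod int p ^ Suc n mod int p ^ n = (x (Suc n) * y (Suc n)) mod int p ^ n"
      by (rule mod_mod_cancel[OF dv])
    also have "\<dots> = (x (Suc n) mod int p ^ n * (y (Suc n) mod int p ^ n)) mod int p ^ n" by (simp add: mod_mult_eq)
    also have "\<dots> = (x n * y n) mod int p ^ n" using assms(2,3) unfolding padic_ints_def by simp
    finally show "(x (Suc n) * y (Suc n)) mod int p ^ Suc n mod int p ^ n = (x n * y n) mod int p ^ n" .
  qed
qed

lemma Zp_props:
  fixes p :: nat and K :: "'f::field_char_0 set"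
  assumes p: "prime p" and Z: "is_Zp_in p K"
  shows "subr K \<and> (\<forall>\<kappa>\<in>K. of_nat p * \<kappa> \<noteq> 1)"
proof -
  have p1: "p > 1" using p prime_gt_1_nat by simp
  have pos: "(0::int) < int p ^ n" for n using p1 by simp
  obtain \<iota> where inj: "inj_on \<iota> (padic_ints p)" and img: "\<iota> ` padic_ints p = K" and one: "\<iota> (pone p) = 1"
    and hom: "\<And>x y. x \<in> padic_ints p \<Longrightarrow> y \<in> padic_ints p \<Longrightarrow> \<iota> (padd p x y) = \<iota> x + \<iota> y \<and> \<iota> (pmult p x y) = \<iota> x * \<iota> y"
    using Z unfolding is_Zp_in_def by blast
  define e :: "nat \<Rightarrow> nat \<Rightarrow> int" where "e m = (\<lambda>n. int m mod int p ^ n)" for m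
  have e_mem: "e m \<in> padic_ints p" for m
    unfolding e_def padic_ints_def using pos by (auto simp: mod_mod_cancel)
  have pone_mem: "pone p \<in> padic_ints p" using e_mem[of 1] by (simp add: e_def pone_def)
  have e0: "padd p (e 0) (e 0) = e 0" by (simp add: padd_def e_def)
  have i0: "\<iota> (e 0) = 0" using hom[OF e_mem e_mem, of 0 0] e0 by simp
  have eS: "padd p (e m) (pone p) = e (Suc m)" for m
    by (simp add: padd_def e_def pone_def fun_eq_iff mod_add_eq add.commute)
  have ie: "\<iota> (e m) = of_nat m" for m
  proof (induction m)
    case 0 then show ?case using i0 by simp
  next
    case (Suc m)
    then show ?case using hom[OF e_mem pone_mem, of m] eS[of m] one by simp
  qed
  define ng where "ng x = (\<lambda>n. (- x n) mod int p ^ n)" for x :: "nat \<Rightarrow> int"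
  have ng_mem: "ng x \<in> padic_ints p" if "x \<in> padic_ints p" for x
    unfolding padic_ints_def ng_def
  proof (intro CollectI allI conjI)
    fix n
    show "0 \<le> - x n mod int p ^ n" "- x n mod int p ^ n < int p ^ n" using pos by auto
    have "- x (Suc n) mod int p ^ Suc n mod int p ^ n = - x (Suc n) mod int p ^ n"
      by (rule mod_mod_cancel) simp
    also have "\<dots> = - (x (Suc n) mod int p ^ n) mod int p ^ n" by (simp add: mod_minus_eq)
    also have "\<dots> = - x n mod int p ^ n" using that unfolding padic_ints_def by simp
    finally show "- x (Suc n) mod int p ^ Suc n mod int p ^ n = - x n mod int p ^ n" .
  qed
  have ng_add: "padd p x (ng x) = e 0" for x
    by (simp add: padd_def ng_def e_def fun_eq_iff mod_add_right_eq)
  have subr: "subr K"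
    unfolding subr_def
  proof (intro conjI ballI)
    show "0 \<in> K" using i0 e_mem[of 0] img by force
    show "1 \<in> K" using one pone_mem img by force
  next
    fix a b assume "a \<in> K" "b \<in> K"
    then obtain x y where "x \<in> padic_ints p" "y \<in> padic_ints p" "a = \<iota> x" "b = \<iota> y" using img by auto
    then show "a + b \<in> K" "a * b \<in> K"
      using hom[of x y] padd_mem[OF p1, of x y] pmult_mem[OF p1, of x y] img by (metis imageI)+
  next
    fix a assume "a \<in> K"
    then obtain x where x: "x \<in> padic_ints p" "a = \<iota> x" using img by auto
    have "\<iota> x + \<iota> (ng x) = 0" using hom[OF x(1) ng_mem[OF x(1)]] ng_add[of x] i0 by simp
    then have "- a = \<iota> (ng x)" using x by (metis add.commute add_eq_0_iff2 minus_unique)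
    then show "- a \<in> K" using ng_mem[OF x(1)] img by auto
  qed
  have "of_nat p * \<kappa> \<noteq> 1" if kK: "\<kappa> \<in> K" for \<kappa>
  proof
    assume h: "of_nat p * \<kappa> = 1"
    obtain w where w: "w \<in> padic_ints p" "\<kappa> = \<iota> w" using kK img by auto
    have "\<iota> (pmult p (e p) w) = \<iota> (pone p)" using hom[OF e_mem w(1), of p] ie[of p] h one w by simp
    then have "pmult p (e p) w = pone p"
      using inj pmult_mem[OF p1 e_mem w(1)] pone_mem by (meson inj_on_def)
    then have "pmult p (e p) w 1 = pone p 1" by simp
    then show False using p1 by (simp add: pmult_def e_def pone_def)
  qed
  with subr show ?thesis by blast
qed

lemma cg_mod_1: "poly (cg_mod q :: 'f::field poly) 1 = 0"
  by (simp add: cg_mod_def poly_monom)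

lemma red_eval: "poly (red q y) 1 = poly (y :: 'f::field poly) 1"
proof -
  have "y = y div cg_mod q * cg_mod q + red q y" unfolding red_def by simp
  then have "poly y 1 = poly (y div cg_mod q * cg_mod q + red q y) 1" by simp
  then show ?thesis by (simp add: cg_mod_1)
qed

lemma red_dvd: "d dvd cg_mod q \<Longrightarrow> d dvd (red q y - (y :: 'f::field poly))"
proof -
  assume "d dvd cg_mod q"
  moreover have "red q y - y = - (y div cg_mod q) * cg_mod q" unfolding red_def
    using div_mult_mod_eq[of y "cg_mod q"] by (simp add: algebra_simps eq_diff_eq)
  ultimately show ?thesis by simp
qed

lemma nat_pow_Suc_gen: "x [^]\<^bsub>G\<^esub> (Suc n) = x [^]\<^bsub>G\<^esub> n \<otimes>\<^bsub>G\<^esub> x"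
  by (simp add: nat_pow_def)

lemma pow_formula:
  fixes xa xb :: "'f::field poly"
  shows "cg_mod q dvd (fst (snd ((k, (xa, xb)) [^]\<^bsub>Crys q M T\<^esub> n)) - (\<Sum>i<n. monom 1 (k * i)) * xa)
       \<and> cg_mod q dvd (snd (snd ((k, (xa, xb)) [^]\<^bsub>Crys q M T\<^esub> n)) - (\<Sum>i<n. monom 1 (k * i)) * xb)"
proof (induction n)
  case 0
  then show ?case by (simp add: Crys_def)
next
  case (Suc n)
  obtain g y1 y2 where zn: "(k, (xa, xb)) [^]\<^bsub>Crys q M T\<^esub> n = (g, (y1, y2))" by (metis prod.exhaust)
  define S where "S = (\<Sum>i<n. monom 1 (k * i) :: 'f poly)"
  have SS: "(\<Sum>i<Suc n. monom 1 (k * i) :: 'f poly) = 1 + monom 1 k * S"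
    unfolding S_def sum.lessThan_Suc_shift by (simp add: sum_distrib_left mult_monom)
  have IH: "cg_mod q dvd (y1 - S * xa)" "cg_mod q dvd (y2 - S * xb)" using Suc zn S_def by auto
  have pw: "(k, (xa, xb)) [^]\<^bsub>Crys q M T\<^esub> Suc n
      = ((g + k) mod q, (red q (monom 1 k * y1) + xa, red q (monom 1 k * y2) + xb))"
    unfolding nat_pow_Suc_gen zn by (simp add: Crys_def act_def pmul2_def)
  have key: "red q (monom 1 k * y) + x - (1 + monom 1 k * S) * x
      = (red q (monom 1 k * y) - monom 1 k * y) + monom 1 k * (y - S * x)" for y x :: "'f poly"
    by (simp add: algebra_simps)
  have A: "cg_mod q dvd (red q (monom 1 k * y1) + xa - (1 + monom 1 k * S) * xa)"
    unfolding key by (rule dvd_add[OF red_dvd[OF dvd_refl] dvd_mult[OF IH(1)]])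
  have B: "cg_mod q dvd (red q (monom 1 k * y2) + xb - (1 + monom 1 k * S) * xb)"
    unfolding key by (rule dvd_add[OF red_dvd[OF dvd_refl] dvd_mult[OF IH(2)]])
  show ?case unfolding pw SS using A B by simp
qed

lemma poly_Phi: "poly (Phi p m :: 'f::field poly) 1 = of_nat p"
  by (simp add: Phi_def poly_sum poly_monom)

lemma poly_am1: "poly (am1 :: 'f::field poly) 1 = 0"
  by (simp add: am1_def)

lemma poly_geo: "poly (\<Sum>i<n. monom 1 (k * i) :: 'f::field poly) 1 = of_nat n"
  by (simp add: poly_sum poly_monom)

lemma poly_geo1: "poly (\<Sum>i<n. monom 1 i :: 'f::field poly) 1 = of_nat n"
  by (simp add: poly_sum poly_monom)

lemma xm1_dvd: "(y - 1) dvd (y ^ m - (1 :: 'a::comm_ring_1))"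
  using power_diff_1_eq[of y m] by simp

lemma Xp_dvd_monom: "(monom 1 p - 1 :: 'f::field poly) dvd (monom 1 (p * m) - 1)"
  using xm1_dvd[of "monom 1 p :: 'f poly" m] by (simp add: monom_power)

lemma Xp_dvd_D: "(monom 1 p - 1 :: 'f::field poly) dvd cg_mod (p^2)"
  using Xp_dvd_monom[of p p] by (simp add: cg_mod_def power2_eq_square)

lemma Xp_dvd_Phi: "(monom 1 p - 1 :: 'f::field poly) dvd (Phi p p - of_nat p)"
proof -
  have "Phi p p - of_nat p = (\<Sum>i<p. (monom 1 (p * i) - 1 :: 'f poly))"
    by (simp add: Phi_def sum_subtractf)
  then show ?thesis by (simp add: dvd_sum Xp_dvd_monom)
qed

lemma red_red_eq: "red q (red q a - (red q b + red q c)) = red q a - (red q b + red q (c :: 'f::field poly))"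
  by (simp add: red_def poly_mod_diff_left poly_mod_add_left)

theorem lemma10:
  fixes p j :: nat and K :: "'f::field_char_0 set"
  assumes "prime p" and "p > 2"
    and "K = Zloc p \<or> is_Zp_in p K"
    and "1 \<le> j" and "j \<le> p - 2"
  shows "torsion_free (Crys (p^2) (U_mod p K j) (fj_cocycle p K j))"
proof -
  note p = assms(1)
  have podd: "odd p" using prime_odd_nat assms(1,2) by blast
  have pp: "p > 0" using assms(2) by simp
  have p0: "(of_nat p :: 'f) \<noteq> 0" using pp by simp
  have KP: "subr K \<and> (\<forall>\<kappa>\<in>K. of_nat p * \<kappa> \<noteq> (1::'f))"
    using assms(3) Zloc_props[OF p] Zp_props[OF p] by blast
  then have K: "subr K" and nK: "\<forall>\<kappa>\<in>K. of_nat p * \<kappa> \<noteq> (1::'f)" by auto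
  define M where "M = U_mod p K j"
  define D where "D = (cg_mod (p^2) :: 'f poly)"
  define Xp where "Xp = (monom 1 p - 1 :: 'f poly)"
  have XpD: "Xp dvd D" unfolding Xp_def D_def by (rule Xp_dvd_D)
  show ?thesis unfolding torsion_free_def M_def[symmetric]
  proof (intro ballI allI impI)
    fix z and n :: nat
    assume zC: "z \<in> carrier (Crys (p^2) M (fj_cocycle p K j))" and n0: "0 < n"
      and zn: "z [^]\<^bsub>Crys (p^2) M (fj_cocycle p K j)\<^esub> n = \<one>\<^bsub>Crys (p^2) M (fj_cocycle p K j)\<^esub>"
    obtain k x1 x2 where z: "z = (k, (x1, x2))" by (metis prod.exhaust)
    have kq: "k < p^2" and cos: "coset M (x1, x2) = fj_cocycle p K j k"
      using zC unfolding z by (auto simp: Crys_def)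
    define Tr where "Tr = pmul2 (p^2) (\<Sum>i<k. monom 1 i)
          (psmult (1 / of_nat (p^2)) (red (p^2) (Phi p 1 * Phi p p), 0) :: 'f poly \<times> 'f poly)"
    have fj: "fj_cocycle p K j k = coset M Tr" unfolding fj_cocycle_def Tr_def M_def by simp
    have zero_red: "(0::'f poly) \<in> cg_ringK (p^2) K"
      using subr_0[OF K] by (simp add: cg_ringK_def cg_ring_def red_def)
    have "pmul2 (p^2) 0 (gen1 p j) + pmul2 (p^2) 0 (gen2 p) = (0 :: 'f poly \<times> 'f poly)"
      by (simp add: pmul2_def red_def zero_prod_def)
    then have zM: "0 \<in> M" unfolding M_def U_mod_def using zero_red by (metis (mono_tags, lifting) CollectI)
    have "Tr \<in> coset M Tr" unfolding coset_def using zM by (metis add.right_neutral image_eqI)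
    then have "Tr \<in> coset M (x1, x2)" using cos fj by simp
    then obtain u where uM: "u \<in> M" and Tru: "Tr = (x1, x2) + u" unfolding coset_def by auto
    obtain r1 r2 where r1: "r1 \<in> cg_ringK (p^2) K" and r2: "r2 \<in> cg_ringK (p^2) K"
      and u: "u = pmul2 (p^2) r1 (gen1 p j) + pmul2 (p^2) r2 (gen2 p)"
      using uM unfolding M_def U_mod_def by blast
    have r1K: "Kp K r1" and r2K: "Kp K r2" using r1 r2 by (auto simp: cg_ringK_def Kp_def)
    have u1: "fst u = red (p^2) (r1 * red (p^2) (am1 ^ (j+1) + Phi p 1)) + red (p^2) (r2 * red (p^2) (am1 * Phi p p))"
      unfolding u by (simp add: pmul2_def gen1_def gen2_def)
    have u2: "snd u = red (p^2) (r1 * red (p^2) (am1 ^ j)) + red (p^2) (r2 * red (p^2) (Phi p p))"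
      unfolding u by (simp add: pmul2_def gen1_def gen2_def)
    have Tr1: "fst Tr = red (p^2) ((\<Sum>i<k. monom 1 i) * smult (1 / of_nat (p^2)) (red (p^2) (Phi p 1 * Phi p p)))"
      unfolding Tr_def by (simp add: pmul2_def psmult_def)
    have Tr2: "snd Tr = 0" unfolding Tr_def by (simp add: pmul2_def psmult_def red_def)
    have x1: "x1 = fst Tr - fst u" and x2: "x2 = snd Tr - snd u" using Tru by (auto simp: prod_eq_iff)
    define S where "S = (\<Sum>i<n. monom 1 (k * i) :: 'f poly)"
    have one: "\<one>\<^bsub>Crys (p^2) M (fj_cocycle p K j)\<^esub> = (0, (0, 0))" by (simp add: Crys_def)
    have "D dvd (0 - S * x1) \<and> D dvd (0 - S * x2)"
      using pow_formula[where q="p^2" and xa=x1 and xb=x2 and k=k and M=M and T="fj_cocycle p K j" and n=n] zn unfolding z one S_def D_def by simp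
    then have DS1: "D dvd S * x1" and DS2: "D dvd S * x2" by (auto simp: dvd_minus_iff)
    have "poly (S * x1) 1 = 0" using DS1 unfolding D_def by (metis cg_mod_1 dvdE mult_zero_left poly_mult)
    then have "of_nat n * poly x1 1 = 0" by (simp add: S_def poly_geo)
    then have px1: "poly x1 1 = 0" using n0 by simp
    have "poly x1 1 = of_nat k - of_nat p * poly r1 1"
      unfolding x1 Tr1 u1 using p0
      by (simp add: red_eval poly_Phi poly_am1 poly_geo1 power2_eq_square field_simps)
    then have kk: "of_nat k = of_nat p * poly r1 1" using px1 by simp
    have r1p: "poly r1 1 \<in> K" by (rule Kp_poly1[OF K r1K])
    show "z = \<one>\<^bsub>Crys (p^2) M (fj_cocycle p K j)\<^esub>"
    proof (cases "k = 0")
      case True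
      then have S0: "S = of_nat n" by (simp add: S_def)
      have "D dvd x1" using DS1 n0 unfolding S0 of_nat_mult_conv_smult by (auto dest: dvd_smult_cancel)
      moreover have "x1 mod D = x1" unfolding x1 Tr1 u1 D_def using red_red_eq
        by (simp add: red_def)
      ultimately have x10: "x1 = 0" by (metis dvd_eq_mod_eq_0)
      have "D dvd x2" using DS2 n0 unfolding S0 of_nat_mult_conv_smult by (auto dest: dvd_smult_cancel)
      moreover have "x2 mod D = x2" unfolding x2 Tr2 u2 D_def
        by (simp add: red_def poly_mod_add_left poly_mod_diff_left)
      ultimately have x20: "x2 = 0" by (metis dvd_eq_mod_eq_0)
      show ?thesis unfolding z one using True x10 x20 by simp
    next
      case False
      show ?thesis
      proof (cases "p dvd k")
        case False
        then show ?thesis using noninv[OF K p nK False r1p kk] by blast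
      next
        case True
        then obtain t where t: "k = p * t" by (auto elim!: dvdE)
        have t0: "t \<noteq> 0" using t \<open>k \<noteq> 0\<close> by simp
        have tp: "t < p" using kq t pp by (simp add: power2_eq_square)
        have ndt: "\<not> p dvd t" using t0 tp by (auto dest: dvd_imp_le)
        have tr: "of_nat t = poly r1 1" using kk t p0 by simp
        have "Xp dvd (S - of_nat n)"
        proof -
          have "S - of_nat n = (\<Sum>i<n. (monom 1 (p * (t * i)) - 1 :: 'f poly))"
            by (simp add: S_def t sum_subtractf mult.assoc)
          then show ?thesis unfolding Xp_def by (simp add: dvd_sum Xp_dvd_monom)
        qed
        then have "Xp dvd (S - of_nat n) * x2" by (rule dvd_mult2)
        moreover have "Xp dvd S * x2" using DS2 XpD by (rule dvd_trans[rotated])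
        ultimately have "Xp dvd (S * x2 - (S - of_nat n) * x2)" by (rule dvd_diff[rotated])
        then have "Xp dvd x2 * of_nat n" by (simp add: algebra_simps)
        then have "Xp dvd smult (of_nat n) x2" by (metis mult.commute of_nat_mult_conv_smult)
        then have Xx2: "Xp dvd x2" using n0 by (auto dest: dvd_smult_cancel)
        define g12 where "g12 = (am1 ^ j :: 'f poly)"
        define g22 where "g22 = (Phi p p :: 'f poly)"
        have rd: "Xp dvd (red (p^2) y - y)" for y using red_dvd[OF XpD[unfolded D_def]] .
        have ident: "r1 * g12 + of_nat p * r2 = - x2 - (red (p^2) (r1 * red (p^2) g12) - r1 * red (p^2) g12)
              - r1 * (red (p^2) g12 - g12) - (red (p^2) (r2 * red (p^2) g22) - r2 * red (p^2) g22)
              - r2 * (red (p^2) g22 - g22) - r2 * (g22 - of_nat p)"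
          unfolding x2 Tr2 u2 g12_def g22_def by (simp add: algebra_simps)
        have a1: "Xp dvd - x2" using Xx2 by simp
        have a6: "Xp dvd r2 * (g22 - of_nat p)" using Xp_dvd_Phi[of p] unfolding g22_def Xp_def
          by (rule dvd_mult)
        have "Xp dvd (r1 * g12 + of_nat p * r2)" unfolding ident
          by (rule dvd_diff[OF dvd_diff[OF dvd_diff[OF dvd_diff[OF dvd_diff[OF a1 rd] dvd_mult[OF rd]] rd] dvd_mult[OF rd]] a6])
        then have "(monom 1 p - 1) dvd (r1 * [:-1, 1:] ^ j + smult (of_nat p) r2)"
          unfolding Xp_def g12_def am1_def of_nat_mult_conv_smult .
        moreover have "j < p" using assms(5) pp by simp
        ultimately obtain \<kappa> where "\<kappa> \<in> K" "poly r1 1 = of_nat p * \<kappa>"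
          using keyF[OF K p podd _ r1K r2K] by blast
        then show ?thesis using noninv[OF K p nK ndt] tr by metis
      qed
    qed
  qed
qed

end
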